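(* Let $n\ge4$. The number of friendship parking functions for the cycle graph $C_n$ is $$|\mathrm{FPF}(C_n)| = n+1+\sum_{i=1}^{n-2}(i+1)(i+2)+\sum_{i=1}^{3}(n+1-i)!\,(i-1)!+\sum_{i=4}^{n}\frac{(n-i+1)!\,i!}{3}.$$
   Context: $C_n$ is the cycle graph with vertex set $[n]=\{1,\dots,n\}$ and edges $\{i,i+1\}$ for $i\in[n-1]$ and $\{n,1\}$. Friendship parking process for a graph $G$ on $[n]$ and a parking preference $p\in[n]^n$: cars $1,\dots,n$ enter in order into spots $1,\dots,n$ (initially empty); spot $k$ is available for car $i$ if it is unoccupied when $i$ enters and each of spots $k-1,k+1$ is unoccupied or occupied by a car adjacent to $i$ in $G$ (spots $0,n+1$ count as unoccupied); car $i$ parks in the first available spot $k\ge p_i$, and fails to park if there is none. $\mathrm{FPF}(G)$ is the set of parking preferences for which all $n$ cars park. *)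

theory Defs
  imports Complex_Main
begin

text \<open>A graph on [n] is given by an adjacency predicate on vertices.
 A parking state maps each spot to the car occupying it (None = empty).\<close>

definition cycle_graph :: "nat \<Rightarrow> nat \<Rightarrow> nat \<Rightarrow> bool" where
  "cycle_graph n i j \<longleftrightarrow> i \<in> {1..n} \<and> j \<in> {1..n} \<and>
     (j = i + 1 \<or> i = j + 1 \<or> (i = n \<and> j = 1) \<or> (i = 1 \<and> j = n))"

definition nbr_ok :: "(nat \<Rightarrow> nat \<Rightarrow> bool) \<Rightarrow> nat \<Rightarrow> (nat \<Rightarrow> nat option) \<Rightarrow> nat \<Rightarrow> nat \<Rightarrow> bool" where
  "nbr_ok G n occ i j \<longleftrightarrow> j = 0 \<or> j = n + 1 \<or>
     (case occ j of None \<Rightarrow> True | Some c \<Rightarrow> G i c)"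

definition available :: "(nat \<Rightarrow> nat \<Rightarrow> bool) \<Rightarrow> nat \<Rightarrow> (nat \<Rightarrow> nat option) \<Rightarrow> nat \<Rightarrow> nat \<Rightarrow> bool" where
  "available G n occ i k \<longleftrightarrow> k \<in> {1..n} \<and> occ k = None \<and>
     nbr_ok G n occ i (k - 1) \<and> nbr_ok G n occ i (k + 1)"

definition park_car :: "(nat \<Rightarrow> nat \<Rightarrow> bool) \<Rightarrow> nat \<Rightarrow> nat \<Rightarrow> nat \<Rightarrow> (nat \<Rightarrow> nat option) \<Rightarrow> (nat \<Rightarrow> nat option) option" where
  "park_car G n i a occ =
     (if \<exists>k. a \<le> k \<and> available G n occ i k
      then Some (occ((LEAST k. a \<le> k \<and> available G n occ i k) := Some i))
      else None)"

text \<open>State after cars 1..m entered; preference of car i is p ! (i-1).\<close>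
fun run :: "(nat \<Rightarrow> nat \<Rightarrow> bool) \<Rightarrow> nat \<Rightarrow> nat list \<Rightarrow> nat \<Rightarrow> (nat \<Rightarrow> nat option) option" where
  "run G n p 0 = Some (\<lambda>_. None)"
| "run G n p (Suc m) = (case run G n p m of None \<Rightarrow> None
      | Some occ \<Rightarrow> park_car G n (Suc m) (p ! m) occ)"

definition FPF :: "(nat \<Rightarrow> nat \<Rightarrow> bool) \<Rightarrow> nat \<Rightarrow> nat list set" where
  "FPF G n = {p. length p = n \<and> set p \<subseteq> {1..n} \<and> run G n p n \<noteq> None}"

end

theory Submission
  imports Defs
begin


primrec st :: "(nat \<Rightarrow> nat) \<Rightarrow> nat \<Rightarrow> (nat \<Rightarrow> nat option)" where
  "st pos 0 = (\<lambda>_. None)"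
| "st pos (Suc m) = (st pos m)(pos (Suc m) := Some (Suc m))"

definition Acc :: "(nat\<Rightarrow>nat\<Rightarrow>bool) \<Rightarrow> nat \<Rightarrow> (nat \<Rightarrow> nat option) \<Rightarrow> nat \<Rightarrow> nat \<Rightarrow> nat set" where
  "Acc G n occ i s = {a. 1 \<le> a \<and> a \<le> s \<and> available G n occ i s \<and>
      (\<forall>k. a \<le> k \<and> k < s \<longrightarrow> \<not> available G n occ i k)}"

definition PS :: "(nat\<Rightarrow>nat\<Rightarrow>bool) \<Rightarrow> nat \<Rightarrow> (nat \<Rightarrow> nat) \<Rightarrow> nat list set" where
  "PS G n pos = {p. length p = n \<and> (\<forall>i<n. p!i \<in> Acc G n (st pos i) (Suc i) (pos (Suc i)))}"

definition ppos :: "(nat\<Rightarrow>nat\<Rightarrow>bool) \<Rightarrow> nat \<Rightarrow> nat list \<Rightarrow> nat \<Rightarrow> nat" where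
  "ppos G n p i = (LEAST k. p!(i-1) \<le> k \<and> available G n (the (run G n p (i-1))) i k)"

lemma Least_Acc:
  assumes "a \<in> Acc G n occ i s"
  shows "(LEAST k. a \<le> k \<and> available G n occ i k) = s"
proof (rule Least_equality)
  show "a \<le> s \<and> available G n occ i s" using assms by (auto simp: Acc_def)
  fix y assume "a \<le> y \<and> available G n occ i y"
  then show "s \<le> y"
  proof (cases "y < s")
    case True
    then have "\<not> available G n occ i y" using assms \<open>a \<le> y \<and> available G n occ i y\<close> unfolding Acc_def by blast
    then show ?thesis using \<open>a \<le> y \<and> available G n occ i y\<close> by blast
  qed simp
qed

lemma park_Acc:
  assumes "a \<in> Acc G n occ i s"
  shows "park_car G n i a occ = Some (occ(s := Some i))"
proof -
  have "a \<le> s \<and> available G n occ i s" using assms by (auto simp: Acc_def)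
  then show ?thesis unfolding park_car_def using Least_Acc[OF assms] by auto
qed

lemma run_PS:
  assumes "p \<in> PS G n pos" "m \<le> n"
  shows "run G n p m = Some (st pos m)"
  using assms(2)
proof (induction m)
  case 0 then show ?case by simp
next
  case (Suc m)
  have "p!m \<in> Acc G n (st pos m) (Suc m) (pos (Suc m))"
    using assms(1) Suc.prems by (auto simp: PS_def)
  then have "park_car G n (Suc m) (p!m) (st pos m) = Some ((st pos m)(pos (Suc m) := Some (Suc m)))"
    by (rule park_Acc)
  moreover have "run G n p m = Some (st pos m)" using Suc by simp
  then have "run G n p (Suc m) = park_car G n (Suc m) (p!m) (st pos m)" by simp
  moreover have "st pos (Suc m) = (st pos m)(pos (Suc m) := Some (Suc m))" by (rule st.simps(2))
  ultimately show ?case by metis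
qed

lemma Acc_range: "a \<in> Acc G n occ i s \<Longrightarrow> a \<in> {1..n}"
  by (auto simp: Acc_def available_def)

lemma PS_sub: "PS G n pos \<subseteq> FPF G n"
proof
  fix p assume p: "p \<in> PS G n pos"
  have "set p \<subseteq> {1..n}"
  proof
    fix x assume "x \<in> set p"
    then obtain i where "i < length p" "p!i = x" by (auto simp: in_set_conv_nth)
    then show "x \<in> {1..n}" using p Acc_range unfolding PS_def by blast
  qed
  then show "p \<in> FPF G n" using p run_PS[OF p, of n] by (auto simp: FPF_def PS_def)
qed

lemma run_ppos:
  assumes "run G n p m \<noteq> None" "\<forall>i<m. 1 \<le> p!i"
  shows "run G n p m = Some (st (ppos G n p) m) \<and>
     (\<forall>i<m. p!i \<in> Acc G n (st (ppos G n p) i) (Suc i) (ppos G n p (Suc i)))"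
  using assms
proof (induction m)
  case 0 then show ?case by simp
next
  case (Suc m)
  obtain occ where occ: "run G n p m = Some occ"
    using Suc.prems by (cases "run G n p m") auto
  have IH: "occ = st (ppos G n p) m \<and>
     (\<forall>i<m. p!i \<in> Acc G n (st (ppos G n p) i) (Suc i) (ppos G n p (Suc i)))"
    using Suc occ by auto
  have pk: "park_car G n (Suc m) (p!m) occ \<noteq> None" using Suc.prems occ by simp
  then have ex: "\<exists>k. p!m \<le> k \<and> available G n occ (Suc m) k"
    unfolding park_car_def by (auto split: if_splits)
  define s where "s = ppos G n p (Suc m)"
  have s: "s = (LEAST k. p!m \<le> k \<and> available G n occ (Suc m) k)"
    unfolding s_def ppos_def using occ by simp
  have s1: "p!m \<le> s \<and> available G n occ (Suc m) s"
    unfolding s by (rule LeastI_ex[OF ex])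
  have s2: "\<forall>k. p!m \<le> k \<and> k < s \<longrightarrow> \<not> available G n occ (Suc m) k"
    unfolding s using not_less_Least by blast
  have "p!m \<in> Acc G n occ (Suc m) s" using s1 s2 Suc.prems(2) by (auto simp: Acc_def)
  then have "park_car G n (Suc m) (p!m) occ = Some (occ(s := Some (Suc m)))" by (rule park_Acc)
  then have r: "run G n p (Suc m) = Some (st (ppos G n p) (Suc m))" using IH occ s_def by simp
  have "\<forall>i<Suc m. p!i \<in> Acc G n (st (ppos G n p) i) (Suc i) (ppos G n p (Suc i))"
  proof (intro allI impI)
    fix i assume "i < Suc m"
    then consider "i < m" | "i = m" by linarith
    then show "p!i \<in> Acc G n (st (ppos G n p) i) (Suc i) (ppos G n p (Suc i))"
      using IH \<open>p!m \<in> Acc G n occ (Suc m) s\<close> s_def by cases auto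
  qed
  with r show ?case by blast
qed

lemma FPF_PS:
  assumes "p \<in> FPF G n"
  shows "p \<in> PS G n (ppos G n p)"
proof -
  have "\<forall>i<n. 1 \<le> p!i"
  proof (intro allI impI)
    fix i assume "i < n"
    then have "p!i \<in> set p" using assms by (simp add: FPF_def)
    then show "1 \<le> p!i" using assms by (auto simp: FPF_def)
  qed
  then show ?thesis using run_ppos[of G n p n] assms by (auto simp: FPF_def PS_def)
qed

lemma PS_ppos:
  assumes "p \<in> PS G n pos" "i \<in> {1..n}"
  shows "ppos G n p i = pos i"
proof -
  obtain j where j: "i = Suc j" "j < n" using assms(2) by (cases i) auto
  have "run G n p j = Some (st pos j)" using run_PS[OF assms(1)] j by simp
  moreover have "p!j \<in> Acc G n (st pos j) (Suc j) (pos (Suc j))" using assms j by (auto simp: PS_def)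
  ultimately show ?thesis unfolding ppos_def using j Least_Acc by simp
qed

lemma st_cong: "(\<forall>i\<in>{1..m}. pos i = pos' i) \<Longrightarrow> st pos m = st pos' m"
  by (induction m) auto

lemma PS_cong:
  assumes "\<forall>i\<in>{1..n}. pos i = pos' i"
  shows "PS G n pos = PS G n pos'"
proof -
  have "\<And>i. i < n \<Longrightarrow> st pos i = st pos' i \<and> pos (Suc i) = pos' (Suc i)"
    using assms by (intro conjI st_cong) auto
  then show ?thesis unfolding PS_def by auto
qed

lemma card_lists_prod:
  assumes "\<And>i. finite (B i)"
  shows "card {p. length p = n \<and> (\<forall>i<n. p!i \<in> B i)} = (\<Prod>i<n. card (B i))"
proof (induction n)
  case 0 then show ?case by simp
next
  case (Suc n)
  let ?L = "{p. length p = n \<and> (\<forall>i<n. p!i \<in> B i)}"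
  let ?f = "\<lambda>(xs::'a list,x::'a). xs @ [x]"
  have eq: "{p. length p = Suc n \<and> (\<forall>i<Suc n. p!i \<in> B i)} = ?f ` (?L \<times> B n)"
  proof (intro equalityI subsetI)
    fix p assume p: "p \<in> {p. length p = Suc n \<and> (\<forall>i<Suc n. p!i \<in> B i)}"
    then have len: "length p = Suc n" and pi: "\<And>i. i < Suc n \<Longrightarrow> p!i \<in> B i" by auto
    have "p \<noteq> []" using len by auto
    then have pe: "p = butlast p @ [last p]" by simp
    have "butlast p \<in> ?L"
    proof -
      have "length (butlast p) = n" using len by simp
      moreover have "\<forall>i<n. butlast p ! i \<in> B i"
        using pi len by (simp add: nth_butlast)
      ultimately show ?thesis by blast
    qed
    moreover have "last p \<in> B n" using pi len \<open>p \<noteq> []\<close> by (simp add: last_conv_nth)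
    ultimately have "(butlast p, last p) \<in> ?L \<times> B n" by blast
    then show "p \<in> ?f ` (?L \<times> B n)" using pe by force
  next
    fix p assume "p \<in> ?f ` (?L \<times> B n)"
    then obtain xs x where p: "p = xs @ [x]" and xs: "xs \<in> ?L" and x: "x \<in> B n" by auto
    have "\<forall>i<Suc n. p!i \<in> B i"
    proof (intro allI impI)
      fix i assume "i < Suc n"
      then consider "i < n" | "i = n" by linarith
      then show "p!i \<in> B i"
      proof cases
        case 1 then show ?thesis using xs p by (simp add: nth_append)
      next
        case 2 then show ?thesis using xs p x by (simp add: nth_append)
      qed
    qed
    then show "p \<in> {p. length p = Suc n \<and> (\<forall>i<Suc n. p!i \<in> B i)}" using xs p by simp
  qed
  have inj: "inj_on ?f (?L \<times> B n)"
    by (rule inj_onI) auto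
  have fin: "finite (B n)" by (rule assms)
  show ?case unfolding eq card_image[OF inj] card_cartesian_product Suc.IH by simp
qed

lemma card_PS:
  shows "card (PS G n pos) = (\<Prod>i<n. card (Acc G n (st pos i) (Suc i) (pos (Suc i))))"
proof -
  let ?B = "\<lambda>i. if i < n then Acc G n (st pos i) (Suc i) (pos (Suc i)) else {}"
  have "PS G n pos = {p. length p = n \<and> (\<forall>i<n. p!i \<in> ?B i)}"
    unfolding PS_def by auto
  then have "card (PS G n pos) = (\<Prod>i<n. card (?B i))"
    using card_lists_prod[of ?B n] by (simp add: Acc_def)
  also have "\<dots> = (\<Prod>i<n. card (Acc G n (st pos i) (Suc i) (pos (Suc i))))"
    by (rule prod.cong) auto
  finally show ?thesis .
qed



lemma st_Some: "st pos m k = Some j \<Longrightarrow> j \<in> {1..m} \<and> pos j = k"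
  by (induction m) (auto split: if_splits)

lemma st_None: "st pos m k = None \<longleftrightarrow> (\<forall>j\<in>{1..m}. pos j \<noteq> k)"
proof (induction m)
  case 0 then show ?case by simp
next
  case (Suc m)
  show ?case
  proof (cases "k = pos (Suc m)")
    case True
    have "Suc m \<in> {1..Suc m}" by simp
    then show ?thesis using True by auto
  next
    case False
    then show ?thesis using Suc.IH by (auto simp: le_Suc_eq)
  qed
qed

lemma st_inj: "inj_on pos {1..m} \<Longrightarrow> j \<in> {1..m} \<Longrightarrow> st pos m (pos j) = Some j"
proof (induction m)
  case 0 then show ?case by simp
next
  case (Suc m)
  show ?case
  proof (cases "j = Suc m")
    case True then show ?thesis by simp
  next
    case False
    then have j: "j \<in> {1..m}" using Suc.prems by auto
    have "pos j \<noteq> pos (Suc m)" using Suc.prems False by (auto simp: inj_on_def)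
    moreover have "inj_on pos {1..m}" using Suc.prems(1) by (rule inj_on_subset) auto
    ultimately show ?thesis using Suc.IH j by simp
  qed
qed

lemma PS_avail:
  assumes "p \<in> PS G n pos" "i < n"
  shows "available G n (st pos i) (Suc i) (pos (Suc i))"
  using assms by (auto simp: PS_def Acc_def)

lemma ps_inj:
  assumes "\<forall>i<n. available G n (st pos i) (Suc i) (pos (Suc i))"
  shows "inj_on pos {1..n}"
proof (rule inj_onI)
  fix x y assume xy: "x \<in> {1..n}" "y \<in> {1..n}" "pos x = pos y"
  show "x = y"
  proof (rule ccontr)
    assume "x \<noteq> y"
    then consider "x < y" | "y < x" by linarith
    then show False
    proof cases
      case 1
      obtain j where j: "y = Suc j" using xy by (cases y) auto
      have "j < n" using j xy by simp
      then have "available G n (st pos j) (Suc j) (pos (Suc j))" using assms by blast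
      then have "st pos j (pos y) = None" using j by (simp add: available_def)
      then show False using st_None[of pos j "pos y"] xy 1 j by auto
    next
      case 2
      obtain j where j: "x = Suc j" using xy by (cases x) auto
      have "j < n" using j xy by simp
      then have "available G n (st pos j) (Suc j) (pos (Suc j))" using assms by blast
      then have "st pos j (pos x) = None" using j by (simp add: available_def)
      then show False using st_None[of pos j "pos x"] xy 2 j by auto
    qed
  qed
qed

lemma ps_range:
  assumes "\<forall>i<n. available G n (st pos i) (Suc i) (pos (Suc i))" "i \<in> {1..n}"
  shows "pos i \<in> {1..n}"
proof -
  obtain j where j: "i = Suc j" using assms by (cases i) auto
  then show ?thesis using assms by (auto simp: available_def)
qed

lemma ps_adj:
  assumes av: "\<forall>i<n. available G n (st pos i) (Suc i) (pos (Suc i))"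
    and sym: "\<And>x y. G x y \<Longrightarrow> G y x"
    and c: "c \<in> {1..n}" "d \<in> {1..n}" "pos d = Suc (pos c)"
  shows "G c d"
proof -
  have inj: "inj_on pos {1..n}" using av by (rule ps_inj)
  have "c \<noteq> d" using c by auto
  then consider "c < d" | "d < c" by linarith
  then show ?thesis
  proof cases
    case 1
    obtain j where j: "d = Suc j" using c by (cases d) auto
    have injj: "inj_on pos {1..j}" using inj by (rule inj_on_subset) (use c j in auto)
    have occ: "st pos j (pos c) = Some c" using st_inj[OF injj] 1 j c by auto
    have "j < n" using j c by simp
    then have "available G n (st pos j) (Suc j) (pos (Suc j))" using av by blast
    then have "available G n (st pos j) d (pos d)" using j by simp
    then have "nbr_ok G n (st pos j) d (pos d - 1)" by (simp add: available_def)
    moreover have "pos d - 1 = pos c" using c by simp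
    moreover have "pos c \<noteq> 0" "pos c \<noteq> n + 1" using ps_range[OF av] c by force+
    ultimately have "G d c" using occ c(3) by (simp add: nbr_ok_def)
    then show ?thesis by (rule sym)
  next
    case 2
    obtain j where j: "c = Suc j" using c by (cases c) auto
    have injj: "inj_on pos {1..j}" using inj by (rule inj_on_subset) (use c j in auto)
    have "d \<in> {1..j}" using 2 j c by auto
    then have occ: "st pos j (pos d) = Some d" by (rule st_inj[OF injj])
    have "j < n" using j c by simp
    then have "available G n (st pos j) (Suc j) (pos (Suc j))" using av by blast
    then have "available G n (st pos j) c (pos c)" using j by simp
    then have "nbr_ok G n (st pos j) c (pos c + 1)" by (simp add: available_def)
    moreover have "pos c + 1 = pos d" using c by simp
    moreover have "pos d \<noteq> 0" "pos d \<noteq> n + 1" using ps_range[OF av] c by force+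
    ultimately show "G c d" using occ by (simp add: nbr_ok_def)
  qed
qed



definition nx :: "nat \<Rightarrow> nat \<Rightarrow> nat" where "nx n c = (if c = n then 1 else c + 1)"
definition pv :: "nat \<Rightarrow> nat \<Rightarrow> nat" where "pv n c = (if c = 1 then n else c - 1)"
definition crinc :: "nat \<Rightarrow> nat \<Rightarrow> nat \<Rightarrow> nat" where
  "crinc n a k = (if k \<le> n - a + 1 then k + a - 1 else k - (n - a + 1))"
definition crdec :: "nat \<Rightarrow> nat \<Rightarrow> nat \<Rightarrow> nat" where
  "crdec n a k = (if k \<le> a then a - k + 1 else a + n - k + 1)"
definition incp :: "nat \<Rightarrow> nat \<Rightarrow> nat \<Rightarrow> nat" where
  "incp n a i = (if a \<le> i then i - a + 1 else n - a + 1 + i)"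
definition decp :: "nat \<Rightarrow> nat \<Rightarrow> nat \<Rightarrow> nat" where
  "decp n a i = (if i \<le> a then a - i + 1 else a + n - i + 1)"

lemma cyc_iff:
  assumes "n \<ge> 3" "c \<in> {1..n}" "d \<in> {1..n}"
  shows "cycle_graph n c d \<longleftrightarrow> d = nx n c \<or> d = pv n c"
  using assms by (auto simp: cycle_graph_def nx_def pv_def)

lemma nx_range: "c \<in> {1..n} \<Longrightarrow> nx n c \<in> {1..n}" by (auto simp: nx_def)
lemma pv_range: "c \<in> {1..n} \<Longrightarrow> pv n c \<in> {1..n}" by (auto simp: pv_def)
lemma pv_nx: "c \<in> {1..n} \<Longrightarrow> pv n (nx n c) = c" by (auto simp: nx_def pv_def)
lemma nx_pv: "c \<in> {1..n} \<Longrightarrow> nx n (pv n c) = c" by (auto simp: nx_def pv_def)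

lemma crinc_1: "a \<in> {1..n} \<Longrightarrow> crinc n a 1 = a" by (auto simp: crinc_def)
lemma crinc_step: "a \<in> {1..n} \<Longrightarrow> 1 \<le> k \<Longrightarrow> k < n \<Longrightarrow> crinc n a (Suc k) = nx n (crinc n a k)"
  by (auto simp: crinc_def nx_def)
lemma crinc_range: "a \<in> {1..n} \<Longrightarrow> k \<in> {1..n} \<Longrightarrow> crinc n a k \<in> {1..n}"
  by (auto simp: crinc_def)
lemma incp_crinc: "a \<in> {1..n} \<Longrightarrow> k \<in> {1..n} \<Longrightarrow> incp n a (crinc n a k) = k"
  by (auto simp: crinc_def incp_def)
lemma crinc_incp: "a \<in> {1..n} \<Longrightarrow> i \<in> {1..n} \<Longrightarrow> crinc n a (incp n a i) = i"
  by (auto simp: crinc_def incp_def)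
lemma incp_range: "a \<in> {1..n} \<Longrightarrow> i \<in> {1..n} \<Longrightarrow> incp n a i \<in> {1..n}"
  by (auto simp: incp_def)

lemma crdec_1: "a \<in> {1..n} \<Longrightarrow> crdec n a 1 = a" by (auto simp: crdec_def)
lemma crdec_step: "a \<in> {1..n} \<Longrightarrow> 1 \<le> k \<Longrightarrow> k < n \<Longrightarrow> crdec n a (Suc k) = pv n (crdec n a k)"
  by (auto simp: crdec_def pv_def)
lemma crdec_range: "a \<in> {1..n} \<Longrightarrow> k \<in> {1..n} \<Longrightarrow> crdec n a k \<in> {1..n}"
  by (auto simp: crdec_def)
lemma decp_crdec: "a \<in> {1..n} \<Longrightarrow> k \<in> {1..n} \<Longrightarrow> decp n a (crdec n a k) = k"
  by (auto simp: crdec_def decp_def)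
lemma crdec_decp: "a \<in> {1..n} \<Longrightarrow> i \<in> {1..n} \<Longrightarrow> crdec n a (decp n a i) = i"
  by (auto simp: crdec_def decp_def)
lemma decp_range: "a \<in> {1..n} \<Longrightarrow> i \<in> {1..n} \<Longrightarrow> decp n a i \<in> {1..n}"
  by (auto simp: decp_def)

lemma walk_dir:
  assumes rng: "\<And>k. k \<in> {1..n} \<Longrightarrow> cr k \<in> {1..n}"
    and inj: "inj_on cr {1..n}"
    and step: "\<And>k. 1 \<le> k \<Longrightarrow> k < n \<Longrightarrow> cr (Suc k) = f (cr k) \<or> cr (Suc k) = g (cr k)"
    and gf: "\<And>c. c \<in> {1..n} \<Longrightarrow> g (f c) = c"
    and start: "n \<ge> 2 \<Longrightarrow> cr 2 = f (cr 1)"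
  shows "1 \<le> k \<Longrightarrow> k < n \<Longrightarrow> cr (Suc k) = f (cr k)"
proof (induction k rule: nat_induct_at_least)
  case base
  then have "cr 2 = f (cr 1)" using start by simp
  then show ?case by (simp add: numeral_2_eq_2)
next
  case (Suc k)
  have kn: "k < n" using Suc.prems by simp
  have IH: "cr (Suc k) = f (cr k)" using Suc.IH kn by blast
  have ne: "cr (Suc (Suc k)) \<noteq> cr k"
  proof
    assume e: "cr (Suc (Suc k)) = cr k"
    have "Suc (Suc k) \<in> {1..n}" "k \<in> {1..n}" using Suc.prems Suc.hyps by auto
    then have "Suc (Suc k) = k" using inj e unfolding inj_on_def by blast
    then show False by simp
  qed
  have "cr k \<in> {1..n}" using rng Suc.hyps kn by simp
  then have "g (cr (Suc k)) = cr k" using IH gf by simp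
  moreover have "cr (Suc (Suc k)) = f (cr (Suc k)) \<or> cr (Suc (Suc k)) = g (cr (Suc k))"
    using step[of "Suc k"] Suc.prems by simp
  ultimately show ?case using ne by metis
qed

lemma walk_formula:
  assumes step: "\<And>k. 1 \<le> k \<Longrightarrow> k < n \<Longrightarrow> cr (Suc k) = f (cr k)"
    and step2: "\<And>k. 1 \<le> k \<Longrightarrow> k < n \<Longrightarrow> h (Suc k) = f (h k)"
    and h1: "h 1 = cr 1"
  shows "1 \<le> k \<Longrightarrow> k \<le> n \<Longrightarrow> cr k = h k"
proof (induction k rule: nat_induct_at_least)
  case base then show ?case using h1 by simp
next
  case (Suc k)
  have kn: "k < n" using Suc.prems by simp
  have "cr k = h k" using Suc.IH kn by simp
  then show ?case using step[OF Suc.hyps kn] step2[OF Suc.hyps kn] by simp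
qed

lemma cycle_walk:
  assumes n: "n \<ge> 3"
    and rng: "\<And>k. k \<in> {1..n} \<Longrightarrow> cr k \<in> {1..n}"
    and inj: "inj_on cr {1..n}"
    and adj: "\<And>k. 1 \<le> k \<Longrightarrow> k < n \<Longrightarrow> cycle_graph n (cr k) (cr (Suc k))"
  shows "\<exists>a\<in>{1..n}. (\<forall>k\<in>{1..n}. cr k = crinc n a k) \<or> (\<forall>k\<in>{1..n}. cr k = crdec n a k)"
proof -
  define a where "a = cr 1"
  have a: "a \<in> {1..n}" using rng n a_def by auto
  have step: "\<And>k. 1 \<le> k \<Longrightarrow> k < n \<Longrightarrow> cr (Suc k) = nx n (cr k) \<or> cr (Suc k) = pv n (cr k)"
  proof -
    fix k assume k: "1 \<le> k" "k < n"
    have "cr k \<in> {1..n}" "cr (Suc k) \<in> {1..n}" using rng k by auto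
    then show "cr (Suc k) = nx n (cr k) \<or> cr (Suc k) = pv n (cr k)"
      using adj[OF k] cyc_iff[OF n] by blast
  qed
  have "cr (Suc 1) = nx n (cr 1) \<or> cr (Suc 1) = pv n (cr 1)" using step[of 1] n by simp
  then have "cr 2 = nx n (cr 1) \<or> cr 2 = pv n (cr 1)" by (simp add: numeral_2_eq_2)
  then show ?thesis
  proof
    assume s: "cr 2 = nx n (cr 1)"
    have st: "\<And>k. 1 \<le> k \<Longrightarrow> k < n \<Longrightarrow> cr (Suc k) = nx n (cr k)"
    proof (rule walk_dir[where g="pv n" and f="nx n" and cr=cr and n=n])
      show "\<And>k. k \<in> {1..n} \<Longrightarrow> cr k \<in> {1..n}" by (rule rng)
      show "inj_on cr {1..n}" by (rule inj)
      show "\<And>k. 1 \<le> k \<Longrightarrow> k < n \<Longrightarrow> cr (Suc k) = nx n (cr k) \<or> cr (Suc k) = pv n (cr k)"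
        by (rule step)
      show "\<And>c. c \<in> {1..n} \<Longrightarrow> pv n (nx n c) = c" by (rule pv_nx)
      show "n \<ge> 2 \<Longrightarrow> cr 2 = nx n (cr 1)" using s by simp
    qed
    have "\<forall>k\<in>{1..n}. cr k = crinc n a k"
    proof (intro ballI)
      fix k assume k: "k \<in> {1..n}"
      show "cr k = crinc n a k"
      proof (rule walk_formula[where f="nx n" and h="crinc n a" and cr=cr and n=n])
        show "\<And>k. 1 \<le> k \<Longrightarrow> k < n \<Longrightarrow> cr (Suc k) = nx n (cr k)" by (rule st)
        show "\<And>k. 1 \<le> k \<Longrightarrow> k < n \<Longrightarrow> crinc n a (Suc k) = nx n (crinc n a k)" by (rule crinc_step[OF a])
        show "crinc n a 1 = cr 1" using crinc_1[OF a] a_def by simp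
      qed (use k in auto)
    qed
    then show ?thesis using a by blast
  next
    assume s: "cr 2 = pv n (cr 1)"
    have st: "\<And>k. 1 \<le> k \<Longrightarrow> k < n \<Longrightarrow> cr (Suc k) = pv n (cr k)"
    proof (rule walk_dir[where g="nx n" and f="pv n" and cr=cr and n=n])
      show "\<And>k. k \<in> {1..n} \<Longrightarrow> cr k \<in> {1..n}" by (rule rng)
      show "inj_on cr {1..n}" by (rule inj)
      show "\<And>k. 1 \<le> k \<Longrightarrow> k < n \<Longrightarrow> cr (Suc k) = pv n (cr k) \<or> cr (Suc k) = nx n (cr k)"
        using step by blast
      show "\<And>c. c \<in> {1..n} \<Longrightarrow> nx n (pv n c) = c" by (rule nx_pv)
      show "n \<ge> 2 \<Longrightarrow> cr 2 = pv n (cr 1)" using s by simp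
    qed
    have "\<forall>k\<in>{1..n}. cr k = crdec n a k"
    proof (intro ballI)
      fix k assume k: "k \<in> {1..n}"
      show "cr k = crdec n a k"
      proof (rule walk_formula[where f="pv n" and h="crdec n a" and cr=cr and n=n])
        show "\<And>k. 1 \<le> k \<Longrightarrow> k < n \<Longrightarrow> cr (Suc k) = pv n (cr k)" by (rule st)
        show "\<And>k. 1 \<le> k \<Longrightarrow> k < n \<Longrightarrow> crdec n a (Suc k) = pv n (crdec n a k)" by (rule crdec_step[OF a])
        show "crdec n a 1 = cr 1" using crdec_1[OF a] a_def by simp
      qed (use k in auto)
    qed
    then show ?thesis using a by blast
  qed
qed



lemma cyc_sym: "cycle_graph n x y \<Longrightarrow> cycle_graph n y x"
  by (auto simp: cycle_graph_def)

lemma FPF_cover: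
  assumes n: "n \<ge> 3" and p: "p \<in> FPF (cycle_graph n) n"
  shows "\<exists>a\<in>{1..n}. (\<forall>i\<in>{1..n}. ppos (cycle_graph n) n p i = incp n a i) \<or>
                     (\<forall>i\<in>{1..n}. ppos (cycle_graph n) n p i = decp n a i)"
proof -
  let ?G = "cycle_graph n"
  define pos where "pos = ppos ?G n p"
  have ps: "p \<in> PS ?G n pos" unfolding pos_def by (rule FPF_PS[OF p])
  have av: "\<forall>i<n. available ?G n (st pos i) (Suc i) (pos (Suc i))"
    using PS_avail[OF ps] by blast
  have inj: "inj_on pos {1..n}" by (rule ps_inj[OF av])
  have rng: "\<And>i. i \<in> {1..n} \<Longrightarrow> pos i \<in> {1..n}" by (rule ps_range[OF av])
  have surj: "pos ` {1..n} = {1..n}"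
    by (rule endo_inj_surj) (use inj rng in auto)
  define cr where "cr = the_inv_into {1..n} pos"
  have cr1: "\<And>k. k \<in> {1..n} \<Longrightarrow> cr k \<in> {1..n} \<and> pos (cr k) = k"
  proof
    fix k assume k: "k \<in> {1..n}"
    then have kk: "k \<in> pos ` {1..n}" using surj by simp
    show "cr k \<in> {1..n}" unfolding cr_def by (rule the_inv_into_into[OF inj kk]) simp
    show "pos (cr k) = k" unfolding cr_def by (rule f_the_inv_into_f[OF inj kk])
  qed
  have cr2: "\<And>i. i \<in> {1..n} \<Longrightarrow> cr (pos i) = i"
    unfolding cr_def using the_inv_into_f_f[OF inj] by auto
  have crinj: "inj_on cr {1..n}"
  proof (rule inj_onI)
    fix x y assume "x \<in> {1..n}" "y \<in> {1..n}" "cr x = cr y"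
    then show "x = y" using cr1 by metis
  qed
  have adj: "\<And>k. 1 \<le> k \<Longrightarrow> k < n \<Longrightarrow> ?G (cr k) (cr (Suc k))"
  proof -
    fix k assume k: "1 \<le> k" "k < n"
    have c: "cr k \<in> {1..n}" "cr (Suc k) \<in> {1..n}" using cr1 k by auto
    have "pos (cr (Suc k)) = Suc (pos (cr k))" using cr1 k by auto
    then show "?G (cr k) (cr (Suc k))" using ps_adj[OF av cyc_sym c] by blast
  qed
  obtain a where a: "a \<in> {1..n}"
    and ad: "(\<forall>k\<in>{1..n}. cr k = crinc n a k) \<or> (\<forall>k\<in>{1..n}. cr k = crdec n a k)"
    using cycle_walk[OF n, of cr] cr1 crinj adj by blast
  from ad show ?thesis
  proof
    assume h: "\<forall>k\<in>{1..n}. cr k = crinc n a k"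
    have "\<forall>i\<in>{1..n}. pos i = incp n a i"
    proof
      fix i assume i: "i \<in> {1..n}"
      have "crinc n a (pos i) = i" using h cr2 rng i by metis
      then have "incp n a i = incp n a (crinc n a (pos i))" by simp
      also have "\<dots> = pos i" using incp_crinc[OF a rng[OF i]] .
      finally show "pos i = incp n a i" by simp
    qed
    then show ?thesis using a pos_def by blast
  next
    assume h: "\<forall>k\<in>{1..n}. cr k = crdec n a k"
    have "\<forall>i\<in>{1..n}. pos i = decp n a i"
    proof
      fix i assume i: "i \<in> {1..n}"
      have "crdec n a (pos i) = i" using h cr2 rng i by metis
      then have "decp n a i = decp n a (crdec n a (pos i))" by simp
      also have "\<dots> = pos i" using decp_crdec[OF a rng[OF i]] .
      finally show "pos i = decp n a i" by simp
    qed
    then show ?thesis using a pos_def by blast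
  qed
qed



definition occf :: "nat \<Rightarrow> (nat \<Rightarrow> nat) \<Rightarrow> nat \<Rightarrow> nat \<Rightarrow> nat option" where
  "occf n cr m = (\<lambda>k. if k \<in> {1..n} \<and> cr k \<le> m then Some (cr k) else None)"

lemma st_explicit:
  assumes p1: "\<And>j. j \<in> {1..n} \<Longrightarrow> pos j \<in> {1..n} \<and> cr (pos j) = j"
    and p2: "\<And>k. k \<in> {1..n} \<Longrightarrow> cr k \<in> {1..n} \<and> pos (cr k) = k"
  shows "m \<le> n \<Longrightarrow> st pos m = occf n cr m"
proof (induction m)
  case 0
  have "\<And>k. k \<in> {1..n} \<Longrightarrow> \<not> cr k \<le> 0" using p2 by fastforce
  then show ?case by (auto simp: occf_def fun_eq_iff)
next
  case (Suc m)
  have IH: "st pos m = occf n cr m" using Suc by simp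
  show ?case
  proof (rule ext)
    fix k
    show "st pos (Suc m) k = occf n cr (Suc m) k"
    proof (cases "k = pos (Suc m)")
      case True
      have "Suc m \<in> {1..n}" using Suc.prems by simp
      then have "k \<in> {1..n} \<and> cr k = Suc m" using p1 True by blast
      then show ?thesis using True by (simp add: occf_def)
    next
      case False
      have "k \<in> {1..n} \<Longrightarrow> cr k \<noteq> Suc m" using p2 False by metis
      then have "occf n cr (Suc m) k = occf n cr m k" by (auto simp: occf_def)
      then show ?thesis using False IH by simp
    qed
  qed
qed

lemma avail_occf:
  "available (cycle_graph n) n (occf n cr m) c k \<longleftrightarrow>
     k \<in> {1..n} \<and> \<not> cr k \<le> m \<and>
     (k = 1 \<or> \<not> cr (k-1) \<le> m \<or> cycle_graph n c (cr (k-1))) \<and>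
     (k = n \<or> \<not> cr (k+1) \<le> m \<or> cycle_graph n c (cr (k+1)))"
  by (auto simp: available_def nbr_ok_def occf_def)

lemma Acc_card:
  assumes "available G n occ i s" "1 \<le> lo" "lo \<le> s"
    "\<And>k. lo \<le> k \<Longrightarrow> k < s \<Longrightarrow> \<not> available G n occ i k"
    "lo = 1 \<or> available G n occ i (lo - 1)"
  shows "card (Acc G n occ i s) = s + 1 - lo"
proof -
  have "Acc G n occ i s = {lo..s}"
  proof (intro equalityI subsetI)
    fix a assume a: "a \<in> Acc G n occ i s"
    have "lo \<le> a"
    proof (rule ccontr)
      assume "\<not> lo \<le> a"
      then have "lo \<noteq> 1" "a \<le> lo - 1" "lo - 1 < s" using a assms(3) by (auto simp: Acc_def)
      then show False using a assms(5) by (auto simp: Acc_def)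
    qed
    then show "a \<in> {lo..s}" using a by (auto simp: Acc_def)
  next
    fix a assume "a \<in> {lo..s}"
    then show "a \<in> Acc G n occ i s" using assms by (auto simp: Acc_def)
  qed
  then show ?thesis by simp
qed

definition winc :: "nat \<Rightarrow> nat \<Rightarrow> nat \<Rightarrow> nat" where
  "winc n a c = (if a \<le> c then c - a + 1 else if c \<le> 2 then c else c + 1)"

lemma inc_weight:
  assumes n: "n \<ge> 4" and a: "a \<in> {1..n}" and c: "c \<in> {1..n}"
  shows "card (Acc (cycle_graph n) n (occf n (crinc n a) (c - 1)) c (incp n a c)) = winc n a c"
proof -
  let ?cr = "crinc n a"
  let ?A = "available (cycle_graph n) n (occf n ?cr (c - 1)) c"
  have AV: "\<And>k. ?A k \<longleftrightarrow>
     k \<in> {1..n} \<and> \<not> ?cr k \<le> c - 1 \<and>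
     (k = 1 \<or> \<not> ?cr (k-1) \<le> c - 1 \<or> cycle_graph n c (?cr (k-1))) \<and>
     (k = n \<or> \<not> ?cr (k+1) \<le> c - 1 \<or> cycle_graph n c (?cr (k+1)))"
    by (rule avail_occf)
  have cg_pred: "c \<ge> 2 \<Longrightarrow> cycle_graph n c (c - 1)" using c by (auto simp: cycle_graph_def)
  have cg_n1: "cycle_graph n n 1" using n by (auto simp: cycle_graph_def)
  have s: "?A (incp n a c)"
  proof (cases "a \<le> c")
    case True
    let ?s = "c - a + 1"
    have sv: "incp n a c = ?s" using True by (simp add: incp_def)
    have i: "?s \<in> {1..n}" using True c a by auto
    have ii: "\<not> ?cr ?s \<le> c - 1" using True c a by (auto simp: crinc_def)
    have iii: "?s = 1 \<or> \<not> ?cr (?s-1) \<le> c - 1 \<or> cycle_graph n c (?cr (?s-1))"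
    proof (cases "c = a")
      case False
      then have "?cr (?s - 1) = c - 1" "c \<ge> 2" using True a c by (auto simp: crinc_def)
      then show ?thesis using cg_pred by simp
    qed simp
    have iv: "?s = n \<or> \<not> ?cr (?s+1) \<le> c - 1 \<or> cycle_graph n c (?cr (?s+1))"
    proof (cases "c = n")
      case True
      show ?thesis
      proof (cases "a = 1")
        case False
        then have "?cr (?s + 1) = 1" using True a c by (auto simp: crinc_def)
        then show ?thesis using cg_n1 True by simp
      qed (use True n in simp)
    next
      case False
      then have "?cr (?s + 1) = c + 1" using True a c by (auto simp: crinc_def)
      then show ?thesis by auto
    qed
    show ?thesis unfolding sv AV using i ii iii iv by blast
  next
    case False
    let ?s = "n - a + 1 + c"
    have sv: "incp n a c = ?s" using False by (simp add: incp_def)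
    have i: "?s \<in> {1..n}" using False c a by auto
    have ii: "\<not> ?cr ?s \<le> c - 1" using False c a by (auto simp: crinc_def)
    have iii: "?s = 1 \<or> \<not> ?cr (?s-1) \<le> c - 1 \<or> cycle_graph n c (?cr (?s-1))"
    proof (cases "c = 1")
      case True
      then have "?cr (?s - 1) = n" using False a c by (auto simp: crinc_def)
      then show ?thesis using True n by simp
    next
      case False2: False
      then have "?cr (?s - 1) = c - 1" "c \<ge> 2" using False a c by (auto simp: crinc_def)
      then show ?thesis using cg_pred by simp
    qed
    have iv: "?s = n \<or> \<not> ?cr (?s+1) \<le> c - 1 \<or> cycle_graph n c (?cr (?s+1))"
    proof (cases "?s = n")
      case False2: False
      then have "?cr (?s + 1) = c + 1" using False a c by (auto simp: crinc_def)
      then show ?thesis by auto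
    qed simp
    show ?thesis unfolding sv AV using i ii iii iv by blast
  qed
  have c1: "1 \<le> c" using c by simp
  consider "a \<le> c" | "c < a" "c = 1" | "c < a" "c = 2" | "c < a" "c \<ge> 3" using c1 by linarith
  then show ?thesis
  proof cases
    case 1
    have "card (Acc (cycle_graph n) n (occf n ?cr (c - 1)) c (incp n a c)) = incp n a c + 1 - 1"
    proof (rule Acc_card[OF s])
      show "1 \<le> (1::nat)" by simp
      show "1 \<le> incp n a c" using 1 by (simp add: incp_def)
      fix k assume "1 \<le> k" "k < incp n a c"
      then show "\<not> ?A k" unfolding AV using 1 n a c by (auto simp: crinc_def incp_def)
    qed simp
    then show ?thesis using 1 by (simp add: incp_def winc_def)
  next
    case 2
    have "card (Acc (cycle_graph n) n (occf n ?cr (c - 1)) c (incp n a c)) = incp n a c + 1 - incp n a c"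
    proof (rule Acc_card[OF s])
      show "1 \<le> incp n a c" using 2 by (simp add: incp_def)
      show "incp n a c = 1 \<or> ?A (incp n a c - 1)"
        unfolding AV using 2 n a c by (auto simp: crinc_def incp_def)
    qed auto
    then show ?thesis using 2 by (simp add: winc_def)
  next
    case 3
    have "card (Acc (cycle_graph n) n (occf n ?cr (c - 1)) c (incp n a c)) = incp n a c + 1 - (incp n a c - 1)"
    proof (rule Acc_card[OF s])
      show "1 \<le> incp n a c - 1" using 3 a by (simp add: incp_def)
      show "incp n a c - 1 \<le> incp n a c" by simp
      fix k assume "incp n a c - 1 \<le> k" "k < incp n a c"
      then show "\<not> ?A k" unfolding AV using 3 n a c by (auto simp: crinc_def incp_def)
    next
      show "incp n a c - 1 = 1 \<or> ?A (incp n a c - 1 - 1)"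
        unfolding AV using 3 n a c by (auto simp: crinc_def incp_def cycle_graph_def)
    qed
    then show ?thesis using 3 a by (simp add: winc_def incp_def)
  next
    case 4
    have "card (Acc (cycle_graph n) n (occf n ?cr (c - 1)) c (incp n a c)) = incp n a c + 1 - (n - a + 1)"
    proof (rule Acc_card[OF s])
      show "1 \<le> n - a + 1" by simp
      show "n - a + 1 \<le> incp n a c" using 4 by (simp add: incp_def)
      fix k assume k: "n - a + 1 \<le> k" "k < incp n a c"
      show "\<not> ?A k"
      proof (cases "k = n - a + 1")
        case True
        have e: "?cr (k+1) = 1" using True 4 a by (auto simp: crinc_def)
        have ne: "\<not> cycle_graph n c 1" using 4 a c n by (auto simp: cycle_graph_def)
        have kn: "k \<noteq> n" using True 4 a by simp
        have "c - 1 \<ge> 1" using 4 by simp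
        then show ?thesis unfolding AV using e ne kn by auto
      next
        case False
        then have "?cr k = k - (n - a + 1)" using k by (auto simp: crinc_def)
        moreover have "k - (n - a + 1) \<le> c - 1" using k 4 by (simp add: incp_def)
        ultimately show ?thesis unfolding AV by simp
      qed
    next
      show "n - a + 1 = 1 \<or> ?A (n - a + 1 - 1)"
        unfolding AV using 4 n a c by (auto simp: crinc_def incp_def)
    qed
    then show ?thesis using 4 a by (simp add: winc_def incp_def)
  qed
qed

definition wdec :: "nat \<Rightarrow> nat \<Rightarrow> nat \<Rightarrow> nat" where
  "wdec n a c = (if c \<le> a then 1 else if c = n - 1 then a + 2 else if c = n then a + 1 else 1)"

lemma dec_weight:
  assumes n: "n \<ge> 4" and a: "a \<in> {1..n}" and c: "c \<in> {1..n}"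
  shows "card (Acc (cycle_graph n) n (occf n (crdec n a) (c - 1)) c (decp n a c)) = wdec n a c"
proof -
  let ?cr = "crdec n a"
  let ?A = "available (cycle_graph n) n (occf n ?cr (c - 1)) c"
  have AV: "\<And>k. ?A k \<longleftrightarrow>
     k \<in> {1..n} \<and> \<not> ?cr k \<le> c - 1 \<and>
     (k = 1 \<or> \<not> ?cr (k-1) \<le> c - 1 \<or> cycle_graph n c (?cr (k-1))) \<and>
     (k = n \<or> \<not> ?cr (k+1) \<le> c - 1 \<or> cycle_graph n c (?cr (k+1)))"
    by (rule avail_occf)
  have cg_pred: "c \<ge> 2 \<Longrightarrow> cycle_graph n c (c - 1)" using c by (auto simp: cycle_graph_def)
  have cg_n1: "cycle_graph n n 1" using n by (auto simp: cycle_graph_def)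
  have c1: "1 \<le> c" "c \<le> n" using c by auto
  have a1: "1 \<le> a" "a \<le> n" using a by auto
  have s: "?A (decp n a c)"
  proof (cases "c \<le> a")
    case True
    let ?s = "a - c + 1"
    have sv: "decp n a c = ?s" using True by (simp add: decp_def)
    have i: "?s \<in> {1..n}" using True c1 a1 by auto
    have ii: "\<not> ?cr ?s \<le> c - 1" using True c1 a1 by (auto simp: crdec_def)
    have iii: "?s = 1 \<or> \<not> ?cr (?s-1) \<le> c - 1 \<or> cycle_graph n c (?cr (?s-1))"
    proof (cases "c = a")
      case False
      then have "?cr (?s - 1) = c + 1" using True a1 c1 by (auto simp: crdec_def)
      then show ?thesis by auto
    qed simp
    have iv: "?s = n \<or> \<not> ?cr (?s+1) \<le> c - 1 \<or> cycle_graph n c (?cr (?s+1))"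
    proof (cases "c = 1")
      case True
      show ?thesis
      proof (cases "a = n")
        case False
        then have "?cr (?s + 1) = n" using True a1 c1 by (auto simp: crdec_def)
        then show ?thesis using True n by auto
      qed (use True n in simp)
    next
      case False
      then have "?cr (?s + 1) = c - 1" "c \<ge> 2" using True a1 c1 by (auto simp: crdec_def)
      then show ?thesis using cg_pred by auto
    qed
    show ?thesis unfolding sv AV using i ii iii iv by blast
  next
    case False
    let ?s = "a + n - c + 1"
    have sv: "decp n a c = ?s" using False by (simp add: decp_def)
    have i: "?s \<in> {1..n}" using False c1 a1 by auto
    have ii: "\<not> ?cr ?s \<le> c - 1" using False c1 a1 by (auto simp: crdec_def)
    have iii: "?s = 1 \<or> \<not> ?cr (?s-1) \<le> c - 1 \<or> cycle_graph n c (?cr (?s-1))"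
    proof (cases "c = n")
      case True
      then have "?cr (?s - 1) = 1" using False a1 c1 by (auto simp: crdec_def)
      then show ?thesis using True cg_n1 by auto
    next
      case False2: False
      then have "?cr (?s - 1) = c + 1" using False a1 c1 by (auto simp: crdec_def)
      then show ?thesis by auto
    qed
    have iv: "?s = n \<or> \<not> ?cr (?s+1) \<le> c - 1 \<or> cycle_graph n c (?cr (?s+1))"
    proof (cases "?s = n")
      case False2: False
      then have "?cr (?s + 1) = c - 1" "c \<ge> 2" using False a1 c1 by (auto simp: crdec_def)
      then show ?thesis using cg_pred by auto
    qed simp
    show ?thesis unfolding sv AV using i ii iii iv by blast
  qed
  consider "c \<le> a" | "a < c" "c \<le> n - 2" | "a < c" "c = n - 1" | "a < c" "c = n"
    using c1 by linarith
  then show ?thesis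
  proof cases
    case 1
    have "card (Acc (cycle_graph n) n (occf n ?cr (c - 1)) c (decp n a c)) = decp n a c + 1 - decp n a c"
    proof (rule Acc_card[OF s])
      show "1 \<le> decp n a c" using 1 by (simp add: decp_def)
      show "decp n a c = 1 \<or> ?A (decp n a c - 1)"
      proof (cases "c = a")
        case False
        let ?k = "a - c"
        have kv: "decp n a c - 1 = ?k" using 1 by (simp add: decp_def)
        have e1: "?cr ?k = c + 1" using 1 False a1 c1 by (auto simp: crdec_def)
        have e2: "?k \<noteq> 1 \<Longrightarrow> ?cr (?k - 1) = c + 2" using 1 False a1 c1 by (auto simp: crdec_def)
        have e3: "?cr (?k + 1) = c" using 1 False a1 c1 by (auto simp: crdec_def)
        have "?A ?k" unfolding AV using e1 e2 e3 1 False a1 c1 by (cases "a - c = 1") auto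
        then show ?thesis using kv by simp
      qed (simp add: decp_def)
    qed auto
    then show ?thesis using 1 by (simp add: wdec_def)
  next
    case 2
    have "card (Acc (cycle_graph n) n (occf n ?cr (c - 1)) c (decp n a c)) = decp n a c + 1 - decp n a c"
    proof (rule Acc_card[OF s])
      show "1 \<le> decp n a c" using 2 by (simp add: decp_def)
      let ?k = "a + n - c"
      have kv: "decp n a c - 1 = ?k" using 2 by (simp add: decp_def)
      have e1: "?cr ?k = c + 1" using 2 a1 c1 by (auto simp: crdec_def)
      have e2: "?cr (?k - 1) = c + 2" using 2 a1 c1 by (auto simp: crdec_def)
      have e3: "?cr (?k + 1) = c" using 2 a1 c1 by (auto simp: crdec_def)
      have "?A ?k" unfolding AV using e1 e2 e3 2 a1 c1 by auto
      then show "decp n a c = 1 \<or> ?A (decp n a c - 1)" using kv by simp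
    qed auto
    then show ?thesis using 2 n by (auto simp: wdec_def)
  next
    case 3
    have "card (Acc (cycle_graph n) n (occf n ?cr (c - 1)) c (decp n a c)) = decp n a c + 1 - 1"
    proof (rule Acc_card[OF s])
      show "1 \<le> (1::nat)" by simp
      show "1 \<le> decp n a c" using 3 by (simp add: decp_def)
      fix k assume k: "1 \<le> k" "k < decp n a c"
      have sv: "decp n a c = a + 2" using 3 n by (simp add: decp_def)
      show "\<not> ?A k"
      proof (cases "k \<le> a")
        case True
        then have "?cr k = a - k + 1" by (simp add: crdec_def)
        moreover have "a - k + 1 \<le> c - 1" using True 3 k by linarith
        ultimately show ?thesis unfolding AV by simp
      next
        case False
        then have kk: "k = a + 1" using k sv by simp
        have e: "?cr (k - 1) = 1" using kk by (simp add: crdec_def)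
        have ne: "\<not> cycle_graph n c 1" using 3 n by (auto simp: cycle_graph_def)
        have "c - 1 \<ge> 1" using 3 n by simp
        then show ?thesis unfolding AV using e ne kk a1 by auto
      qed
    qed simp
    then show ?thesis using 3 n by (simp add: wdec_def decp_def)
  next
    case 4
    have "card (Acc (cycle_graph n) n (occf n ?cr (c - 1)) c (decp n a c)) = decp n a c + 1 - 1"
    proof (rule Acc_card[OF s])
      show "1 \<le> (1::nat)" by simp
      show "1 \<le> decp n a c" using 4 by (simp add: decp_def)
      fix k assume k: "1 \<le> k" "k < decp n a c"
      have sv: "decp n a c = a + 1" using 4 n by (simp add: decp_def)
      then have "k \<le> a" using k by simp
      then have "?cr k = a - k + 1" by (simp add: crdec_def)
      moreover have "a - k + 1 \<le> c - 1" using \<open>k \<le> a\<close> 4 k by linarith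
      ultimately show "\<not> ?A k" unfolding AV by simp
    qed simp
    then show ?thesis using 4 n by (simp add: wdec_def decp_def)
  qed
qed



lemma card_PS_inc:
  assumes n: "n \<ge> 4" and a: "a \<in> {1..n}"
  shows "card (PS (cycle_graph n) n (incp n a)) = (\<Prod>c\<in>{1..n}. winc n a c)"
proof -
  have st: "\<And>m. m \<le> n \<Longrightarrow> st (incp n a) m = occf n (crinc n a) m"
    by (rule st_explicit) (use a incp_range crinc_incp crinc_range incp_crinc in auto)
  have "card (PS (cycle_graph n) n (incp n a)) =
     (\<Prod>i<n. card (Acc (cycle_graph n) n (st (incp n a) i) (Suc i) (incp n a (Suc i))))"
    by (rule card_PS)
  also have "\<dots> = (\<Prod>i<n. winc n a (Suc i))"
  proof (rule prod.cong)
    fix i assume i: "i \<in> {..<n}"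
    have "card (Acc (cycle_graph n) n (occf n (crinc n a) (Suc i - 1)) (Suc i) (incp n a (Suc i))) = winc n a (Suc i)"
      by (rule inc_weight) (use n a i in auto)
    then show "card (Acc (cycle_graph n) n (st (incp n a) i) (Suc i) (incp n a (Suc i))) = winc n a (Suc i)"
      using st[of i] i by simp
  qed simp
  also have "\<dots> = (\<Prod>c\<in>{1..n}. winc n a c)"
    using prod.atLeast1_atMost_eq[of "winc n a" n] by simp
  finally show ?thesis .
qed

lemma card_PS_dec:
  assumes n: "n \<ge> 4" and a: "a \<in> {1..n}"
  shows "card (PS (cycle_graph n) n (decp n a)) = (\<Prod>c\<in>{1..n}. wdec n a c)"
proof -
  have st: "\<And>m. m \<le> n \<Longrightarrow> st (decp n a) m = occf n (crdec n a) m"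
    by (rule st_explicit) (use a decp_range crdec_decp crdec_range decp_crdec in auto)
  have "card (PS (cycle_graph n) n (decp n a)) =
     (\<Prod>i<n. card (Acc (cycle_graph n) n (st (decp n a) i) (Suc i) (decp n a (Suc i))))"
    by (rule card_PS)
  also have "\<dots> = (\<Prod>i<n. wdec n a (Suc i))"
  proof (rule prod.cong)
    fix i assume i: "i \<in> {..<n}"
    have "card (Acc (cycle_graph n) n (occf n (crdec n a) (Suc i - 1)) (Suc i) (decp n a (Suc i))) = wdec n a (Suc i)"
      by (rule dec_weight) (use n a i in auto)
    then show "card (Acc (cycle_graph n) n (st (decp n a) i) (Suc i) (decp n a (Suc i))) = wdec n a (Suc i)"
      using st[of i] i by simp
  qed simp
  also have "\<dots> = (\<Prod>c\<in>{1..n}. wdec n a c)"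
    using prod.atLeast1_atMost_eq[of "wdec n a" n] by simp
  finally show ?thesis .
qed

definition hh :: "nat \<Rightarrow> nat" where "hh c = (if c \<le> 2 then c else c + 1)"

lemma prod_hh: "m \<ge> 2 \<Longrightarrow> 3 * (\<Prod>c\<in>{1..m}. hh c) = fact (m + 1)"
proof (induction m rule: nat_induct_at_least)
  case base
  have "{1..2::nat} = {1,2}" by auto
  then show ?case by (simp add: hh_def fact_numeral)
next
  case (Suc m)
  have "3 * (\<Prod>c\<in>{1..Suc m}. hh c) = 3 * (\<Prod>c\<in>{1..m}. hh c) * hh (Suc m)" by simp
  also have "\<dots> = fact (m + 1) * (m + 2)" using Suc by (simp add: hh_def)
  also have "\<dots> = fact (Suc m + 1)" by (simp add: algebra_simps)
  finally show ?case .
qed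

lemma prod_winc_low:
  assumes "a \<ge> 1"
  shows "(\<Prod>c\<in>{1..a - 1}. winc n a c) = (\<Prod>c\<in>{1..a - 1}. hh c)"
  by (rule prod.cong) (auto simp: winc_def hh_def)

lemma prod_winc_split:
  assumes "a \<ge> 1"
  shows "m \<ge> a - 1 \<Longrightarrow> (\<Prod>c\<in>{1..m}. winc n a c) = (\<Prod>c\<in>{1..a - 1}. hh c) * fact (m + 1 - a)"
proof (induction m rule: nat_induct_at_least)
  case base
  then show ?case using prod_winc_low[OF assms] assms by simp
next
  case (Suc m)
  have "(\<Prod>c\<in>{1..Suc m}. winc n a c) = (\<Prod>c\<in>{1..m}. winc n a c) * winc n a (Suc m)" by simp
  also have w: "winc n a (Suc m) = Suc (m + 1 - a)" using Suc.hyps assms by (auto simp: winc_def)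
  also have "(\<Prod>c\<in>{1..m}. winc n a c) = (\<Prod>c\<in>{1..a - 1}. hh c) * fact (m + 1 - a)"
    by (rule Suc.IH)
  also have "(\<Prod>c\<in>{1..a - 1}. hh c) * fact (m + 1 - a) * Suc (m + 1 - a)
     = (\<Prod>c\<in>{1..a - 1}. hh c) * fact (Suc (m + 1 - a))" by (simp add: fact_Suc algebra_simps)
  also have "Suc (m + 1 - a) = Suc m + 1 - a" using Suc.hyps assms by simp
  finally show ?case .
qed

lemma Pinc_small:
  assumes "a \<in> {1..3}" "n \<ge> 4"
  shows "(\<Prod>c\<in>{1..n}. winc n a c) = fact (n + 1 - a) * fact (a - 1)"
proof -
  have "(\<Prod>c\<in>{1..n}. winc n a c) = (\<Prod>c\<in>{1..a - 1}. hh c) * fact (n + 1 - a)"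
    by (rule prod_winc_split) (use assms in auto)
  moreover have "(\<Prod>c\<in>{1..a - 1}. hh c) = fact (a - 1)"
  proof -
    have "a = 1 \<or> a = 2 \<or> a = 3" using assms by auto
    moreover have "{1..2::nat} = {1,2}" by auto
    ultimately show ?thesis by (auto simp: hh_def fact_numeral)
  qed
  ultimately show ?thesis by simp
qed

lemma Pinc_big:
  assumes "a \<in> {4..n}"
  shows "3 * (\<Prod>c\<in>{1..n}. winc n a c) = fact (n - a + 1) * fact a"
proof -
  have "(\<Prod>c\<in>{1..n}. winc n a c) = (\<Prod>c\<in>{1..a - 1}. hh c) * fact (n + 1 - a)"
    by (rule prod_winc_split) (use assms in auto)
  moreover have "3 * (\<Prod>c\<in>{1..a - 1}. hh c) = fact a"
  proof -
    have "a - 1 \<ge> 2" using assms by auto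
    from prod_hh[OF this] have "3 * (\<Prod>c\<in>{1..a - 1}. hh c) = fact (a - 1 + 1)" .
    moreover have "a - 1 + 1 = a" using assms by simp
    ultimately show ?thesis by simp
  qed
  moreover have "n + 1 - a = n - a + 1" using assms by auto
  ultimately have "3 * (\<Prod>c\<in>{1..n}. winc n a c) = fact a * fact (n - a + 1)"
    by (metis mult.assoc)
  then show ?thesis by (simp add: mult.commute)
qed

lemma Pdec:
  assumes n: "n \<ge> 4" and a: "a \<in> {1..n}"
  shows "(\<Prod>c\<in>{1..n}. wdec n a c) = (if a \<le> n - 2 then (a + 1) * (a + 2) else if a = n - 1 then n else 1)"
proof -
  define m where "m = n - 2"
  have m: "n = Suc (Suc m)" using n unfolding m_def by simp
  have one: "(\<Prod>c\<in>{1..m}. wdec n a c) = 1"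
  proof (rule prod.neutral, rule ballI)
    fix c assume "c \<in> {1..m}"
    then have "c \<noteq> n - 1" "c \<noteq> n" using m by auto
    then show "wdec n a c = 1" by (simp add: wdec_def)
  qed
  have "(\<Prod>c\<in>{1..n}. wdec n a c) = (\<Prod>c\<in>{1..Suc (Suc m)}. wdec n a c)" using m by simp
  also have "\<dots> = (\<Prod>c\<in>{1..m}. wdec n a c) * wdec n a (Suc m) * wdec n a (Suc (Suc m))" by simp
  also have "\<dots> = wdec n a (Suc m) * wdec n a (Suc (Suc m))" using one by simp
  also have "\<dots> = wdec n a (n - 1) * wdec n a n" using m by simp
  finally have e: "(\<Prod>c\<in>{1..n}. wdec n a c) = wdec n a (n - 1) * wdec n a n" .
  have nn: "n - 1 \<noteq> n" using n by simp
  consider "a \<le> n - 2" | "a = n - 1" | "a = n" using a by fastforce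
  then show ?thesis
  proof cases
    case 1
    then have "wdec n a (n - 1) = a + 2" "wdec n a n = a + 1" using n by (auto simp: wdec_def)
    then show ?thesis using e 1 by simp
  next
    case 2
    then have "wdec n a (n - 1) = 1" "wdec n a n = n" using n by (auto simp: wdec_def)
    then show ?thesis using e 2 n by simp
  next
    case 3
    then have "wdec n a (n - 1) = 1" "wdec n a n = 1" using n by (auto simp: wdec_def)
    then show ?thesis using e 3 n by auto
  qed
qed



definition FF :: "nat \<Rightarrow> nat \<times> bool \<Rightarrow> nat \<Rightarrow> nat" where
  "FF n x = (if snd x then incp n (fst x) else decp n (fst x))"

lemma FF_one:
  assumes "b \<in> {1..n}" "i \<in> {1..n}" "FF n (b, e) i = 1"
  shows "i = b"
  using assms by (auto simp: FF_def incp_def decp_def split: if_splits)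

lemma FF_inj:
  assumes n: "n \<ge> 3" and x: "x \<in> {1..n} \<times> UNIV" and y: "y \<in> {1..n} \<times> UNIV"
    and eq: "\<forall>i\<in>{1..n}. FF n x i = FF n y i"
  shows "x = y"
proof -
  obtain a d where xa: "x = (a, d)" by (cases x)
  obtain b e where yb: "y = (b, e)" by (cases y)
  have a: "a \<in> {1..n}" and b: "b \<in> {1..n}" using x y xa yb by auto
  have "FF n (a, d) a = 1" by (simp add: FF_def incp_def decp_def)
  then have "FF n (b, e) a = 1" using eq a xa yb by simp
  then have ab: "a = b" using FF_one[OF b a] by simp
  have nxr: "nx n a \<in> {1..n}" using a by (rule nx_range)
  have i2: "incp n a (nx n a) = 2" using a n by (auto simp: incp_def nx_def)
  have dn: "decp n a (nx n a) = n" using a n by (auto simp: decp_def nx_def)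
  have "d = e"
  proof (rule ccontr)
    assume "d \<noteq> e"
    then have "FF n (a, d) (nx n a) \<noteq> FF n (a, e) (nx n a)"
      using i2 dn n by (cases d; cases e) (auto simp: FF_def)
    then show False using eq nxr xa yb ab by simp
  qed
  then show ?thesis using xa yb ab by simp
qed

lemma FPF_union:
  assumes n: "n \<ge> 4"
  shows "FPF (cycle_graph n) n = (\<Union>x\<in>{1..n} \<times> UNIV. PS (cycle_graph n) n (FF n x))"
proof (intro equalityI subsetI)
  fix p assume p: "p \<in> FPF (cycle_graph n) n"
  have n3: "n \<ge> 3" using n by simp
  obtain a where a: "a \<in> {1..n}" and h: "(\<forall>i\<in>{1..n}. ppos (cycle_graph n) n p i = incp n a i) \<or>
                     (\<forall>i\<in>{1..n}. ppos (cycle_graph n) n p i = decp n a i)"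
    using FPF_cover[OF n3 p] by blast
  have ps: "p \<in> PS (cycle_graph n) n (ppos (cycle_graph n) n p)" by (rule FPF_PS[OF p])
  from h show "p \<in> (\<Union>x\<in>{1..n} \<times> UNIV. PS (cycle_graph n) n (FF n x))"
  proof
    assume h1: "\<forall>i\<in>{1..n}. ppos (cycle_graph n) n p i = incp n a i"
    have "p \<in> PS (cycle_graph n) n (FF n (a, True))"
      using ps PS_cong[OF h1] by (simp add: FF_def)
    then show ?thesis using a by blast
  next
    assume h1: "\<forall>i\<in>{1..n}. ppos (cycle_graph n) n p i = decp n a i"
    have "p \<in> PS (cycle_graph n) n (FF n (a, False))"
      using ps PS_cong[OF h1] by (simp add: FF_def)
    then show ?thesis using a by blast
  qed
next
  fix p assume "p \<in> (\<Union>x\<in>{1..n} \<times> UNIV. PS (cycle_graph n) n (FF n x))"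
  then show "p \<in> FPF (cycle_graph n) n" using PS_sub by blast
qed

lemma finite_FPF: "finite (FPF G n)"
proof -
  have "FPF G n \<subseteq> {xs. set xs \<subseteq> {1..n} \<and> length xs = n}" by (auto simp: FPF_def)
  moreover have "finite {xs. set xs \<subseteq> {1..n} \<and> length xs = n}"
    by (rule finite_lists_length_eq) simp
  ultimately show ?thesis by (rule finite_subset)
qed

lemma card_FPF_sum:
  assumes n: "n \<ge> 4"
  shows "card (FPF (cycle_graph n) n) =
     (\<Sum>a\<in>{1..n}. (\<Prod>c\<in>{1..n}. winc n a c) + (\<Prod>c\<in>{1..n}. wdec n a c))"
proof -
  let ?G = "cycle_graph n"
  have fin: "\<forall>x\<in>{1..n} \<times> (UNIV::bool set). finite (PS ?G n (FF n x))"
  proof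
    fix x show "finite (PS ?G n (FF n x))" by (rule finite_subset[OF PS_sub finite_FPF])
  qed
  have disj: "\<forall>x\<in>{1..n} \<times> (UNIV::bool set). \<forall>y\<in>{1..n} \<times> UNIV. x \<noteq> y \<longrightarrow>
      PS ?G n (FF n x) \<inter> PS ?G n (FF n y) = {}"
  proof (intro ballI impI)
    fix x y assume x: "x \<in> {1..n} \<times> (UNIV::bool set)" and y: "y \<in> {1..n} \<times> (UNIV::bool set)" and xy: "x \<noteq> y"
    show "PS ?G n (FF n x) \<inter> PS ?G n (FF n y) = {}"
    proof (rule ccontr)
      assume "PS ?G n (FF n x) \<inter> PS ?G n (FF n y) \<noteq> {}"
      then obtain p where p1: "p \<in> PS ?G n (FF n x)" and p2: "p \<in> PS ?G n (FF n y)" by blast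
      have "\<forall>i\<in>{1..n}. FF n x i = FF n y i"
        using PS_ppos[OF p1] PS_ppos[OF p2] by simp
      moreover have "n \<ge> 3" using n by simp
      ultimately have "x = y" using FF_inj x y by blast
      then show False using xy by simp
    qed
  qed
  have "card (FPF ?G n) = (\<Sum>x\<in>{1..n} \<times> (UNIV::bool set). card (PS ?G n (FF n x)))"
    unfolding FPF_union[OF n] by (rule card_UN_disjoint[OF _ fin disj]) simp
  also have "\<dots> = (\<Sum>a\<in>{1..n}. \<Sum>b\<in>(UNIV::bool set). card (PS ?G n (FF n (a, b))))"
    unfolding sum.cartesian_product by (simp add: case_prod_unfold)
  also have "\<dots> = (\<Sum>a\<in>{1..n}. card (PS ?G n (incp n a)) + card (PS ?G n (decp n a)))"
  proof (rule sum.cong)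
    fix a assume a: "a \<in> {1..n}"
    show "(\<Sum>b\<in>(UNIV::bool set). card (PS ?G n (FF n (a, b)))) =
       card (PS ?G n (incp n a)) + card (PS ?G n (decp n a))"
      by (simp add: UNIV_bool FF_def)
  qed simp
  also have "\<dots> = (\<Sum>a\<in>{1..n}. (\<Prod>c\<in>{1..n}. winc n a c) + (\<Prod>c\<in>{1..n}. wdec n a c))"
  proof (rule sum.cong)
    fix a assume a: "a \<in> {1..n}"
    show "card (PS ?G n (incp n a)) + card (PS ?G n (decp n a)) =
      (\<Prod>c\<in>{1..n}. winc n a c) + (\<Prod>c\<in>{1..n}. wdec n a c)"
      using card_PS_inc[OF n a] card_PS_dec[OF n a] by simp
  qed simp
  finally show ?thesis .
qed

lemma inc_sum:
  assumes n: "n \<ge> 4"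
  shows "(\<Sum>a\<in>{1..n}. real (\<Prod>c\<in>{1..n}. winc n a c)) =
    (\<Sum>i=1..3. real (fact (n + 1 - i) * fact (i - 1))) + (\<Sum>i=4..n. real (fact (n - i + 1) * fact i) / 3)"
proof -
  have "{1..n} = {1..3 + (n - 3)}" using n by simp
  then have "(\<Sum>a\<in>{1..n}. real (\<Prod>c\<in>{1..n}. winc n a c)) =
     (\<Sum>a\<in>{1..3}. real (\<Prod>c\<in>{1..n}. winc n a c)) + (\<Sum>a\<in>{3 + 1..3 + (n - 3)}. real (\<Prod>c\<in>{1..n}. winc n a c))"
    using sum.ub_add_nat[of 1 3 "\<lambda>a. real (\<Prod>c\<in>{1..n}. winc n a c)" "n - 3"] by simp
  also have "{3 + 1..3 + (n - 3)} = {4..n}" using n by simp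
  also have "(\<Sum>a\<in>{1..3}. real (\<Prod>c\<in>{1..n}. winc n a c)) = (\<Sum>i=1..3. real (fact (n + 1 - i) * fact (i - 1)))"
    by (rule sum.cong) (use Pinc_small n in auto)
  also have "(\<Sum>a\<in>{4..n}. real (\<Prod>c\<in>{1..n}. winc n a c)) = (\<Sum>i=4..n. real (fact (n - i + 1) * fact i) / 3)"
  proof (rule sum.cong)
    fix a assume a: "a \<in> {4..n}"
    have "real (3 * (\<Prod>c\<in>{1..n}. winc n a c)) = real (fact (n - a + 1) * fact a)"
      using Pinc_big[OF a] by simp
    then show "real (\<Prod>c\<in>{1..n}. winc n a c) = real (fact (n - a + 1) * fact a) / 3"
      by simp
  qed simp
  finally show ?thesis .
qed

lemma dec_sum:
  assumes n: "n \<ge> 4"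
  shows "(\<Sum>a\<in>{1..n}. real (\<Prod>c\<in>{1..n}. wdec n a c)) =
    real (n + 1) + (\<Sum>i=1..n-2. real ((i + 1) * (i + 2)))"
proof -
  define m where "m = n - 2"
  have m: "n = Suc (Suc m)" using n unfolding m_def by simp
  let ?f = "\<lambda>a. real (\<Prod>c\<in>{1..n}. wdec n a c)"
  have "(\<Sum>a\<in>{1..n}. ?f a) = (\<Sum>a\<in>{1..Suc (Suc m)}. ?f a)" using m by simp
  also have "\<dots> = (\<Sum>a\<in>{1..m}. ?f a) + ?f (Suc m) + ?f (Suc (Suc m))" by simp
  also have "(\<Sum>a\<in>{1..m}. ?f a) = (\<Sum>i=1..n-2. real ((i + 1) * (i + 2)))"
  proof (rule sum.cong)
    fix a assume a: "a \<in> {1..n-2}"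
    then have "a \<in> {1..n}" by auto
    then show "?f a = real ((a + 1) * (a + 2))" using Pdec[OF n] a by simp
  qed (simp add: m_def)
  also have "?f (Suc m) = real n"
  proof -
    have "Suc m \<in> {1..n}" "Suc m = n - 1" "\<not> Suc m \<le> n - 2" using m by auto
    then show ?thesis using Pdec[OF n, of "Suc m"] by simp
  qed
  also have "?f (Suc (Suc m)) = 1"
  proof -
    have "Suc (Suc m) \<in> {1..n}" "Suc (Suc m) \<noteq> n - 1" "\<not> Suc (Suc m) \<le> n - 2" using m by auto
    then show ?thesis using Pdec[OF n, of "Suc (Suc m)"] by simp
  qed
  finally show ?thesis by simp
qed

theorem theorem2p10:
  fixes n :: nat
  assumes "n \<ge> 4"
  shows "real (card (FPF (cycle_graph n) n)) =
    real (n + 1) + (\<Sum>i=1..n-2. real ((i + 1) * (i + 2)))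
    + (\<Sum>i=1..3. real (fact (n + 1 - i) * fact (i - 1)))
    + (\<Sum>i=4..n. real (fact (n - i + 1) * fact i) / 3)"
proof -
  have "real (card (FPF (cycle_graph n) n)) =
     (\<Sum>a\<in>{1..n}. real (\<Prod>c\<in>{1..n}. winc n a c)) + (\<Sum>a\<in>{1..n}. real (\<Prod>c\<in>{1..n}. wdec n a c))"
    unfolding card_FPF_sum[OF assms] by (simp add: sum.distrib)
  then show ?thesis using inc_sum[OF assms] dec_sum[OF assms] by simp
qed

end
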